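(* Let $f:M^2\to\mathbb{R}^3$ be a translating soliton with height function $u=\langle f,\operatorname{v}\rangle$. On the open set $M^2\setminus\operatorname{Crit}(u)$ where $\nabla u\neq0$, the vector field $$W=-\frac{\nabla H+H\nabla u}{|\nabla u|^2}=-\frac{\nabla(e^uH)}{e^u|\nabla u|^2}$$ is divergence free, and the Gauss curvature satisfies $K=\langle\nabla H,W\rangle=\operatorname{div}(HW)$.
   Context: A translating soliton is an immersion $f:M^2\to\mathbb{R}^3$ of an oriented surface with unit normal $\xi$ whose scalar mean curvature $H$ (trace of $A(v,w)=-\langle\vec A(v,w),\xi\rangle$, $\vec A$ the second fundamental form) satisfies $H=-\langle\operatorname{v},\xi\rangle$ with $\operatorname{v}=\operatorname{e}_3$. $\nabla$, $\operatorname{div}$ are taken with respect to the induced metric, $K$ is its Gauss curvature, and $\operatorname{Crit}(u)=\{\nabla u=0\}=\{H^2=1\}$. *)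

theory Defs
  imports "HOL-Analysis.Analysis"
begin

text \<open>A piece of the
surface is given by a parametrisation f : U \<rightarrow> R^3 on an open set U of R^2;
all intrinsic quantities are computed in these coordinates.  Vector fields on
the surface are represented by their coordinate components (functions U \<rightarrow> R^2).\<close>

definition pd :: "2 \<Rightarrow> (real^2 \<Rightarrow> 'a::real_normed_vector) \<Rightarrow> real^2 \<Rightarrow> 'a" where
  "pd i g x = frechet_derivative g (at x) (axis i 1)"

definition smooth_on :: "(real^2) set \<Rightarrow> (real^2 \<Rightarrow> 'a::real_normed_vector) \<Rightarrow> bool" where
  "smooth_on U g \<longleftrightarrow> (\<forall>is. \<forall>x\<in>U. foldr pd is g differentiable (at x))"

definition immersion_on :: "(real^2) set \<Rightarrow> (real^2 \<Rightarrow> real^3) \<Rightarrow> bool" where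
  "immersion_on U f \<longleftrightarrow> open U \<and> smooth_on U f \<and>
     (\<forall>x\<in>U. cross3 (pd 1 f x) (pd 2 f x) \<noteq> 0)"

definition normal :: "(real^2 \<Rightarrow> real^3) \<Rightarrow> real^2 \<Rightarrow> real^3" where
  "normal f x = (1 / norm (cross3 (pd 1 f x) (pd 2 f x))) *\<^sub>R cross3 (pd 1 f x) (pd 2 f x)"

definition metric :: "(real^2 \<Rightarrow> real^3) \<Rightarrow> real^2 \<Rightarrow> real^2^2" where
  "metric f x = (\<chi> i j. pd i f x \<bullet> pd j f x)"

definition ginv :: "(real^2 \<Rightarrow> real^3) \<Rightarrow> real^2 \<Rightarrow> real^2^2" where
  "ginv f x = matrix_inv (metric f x)"

text \<open>Scalar second fundamental form A(v,w) = - <vecA(v,w), xi>; in coordinates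
A_ij = - <d_i d_j f, xi>.\<close>
definition sff :: "(real^2 \<Rightarrow> real^3) \<Rightarrow> real^2 \<Rightarrow> real^2^2" where
  "sff f x = (\<chi> i j. - (pd i (pd j f) x \<bullet> normal f x))"

definition mean_curv :: "(real^2 \<Rightarrow> real^3) \<Rightarrow> real^2 \<Rightarrow> real" where
  "mean_curv f x = (\<Sum>i\<in>UNIV. \<Sum>j\<in>UNIV. ginv f x $ i $ j * sff f x $ i $ j)"

definition grad :: "(real^2 \<Rightarrow> real^3) \<Rightarrow> (real^2 \<Rightarrow> real) \<Rightarrow> real^2 \<Rightarrow> real^2" where
  "grad f \<phi> x = ginv f x *v (\<chi> j. pd j \<phi> x)"

definition gin :: "(real^2 \<Rightarrow> real^3) \<Rightarrow> real^2 \<Rightarrow> real^2 \<Rightarrow> real^2 \<Rightarrow> real" where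
  "gin f x X Y = X \<bullet> (metric f x *v Y)"

definition vol :: "(real^2 \<Rightarrow> real^3) \<Rightarrow> real^2 \<Rightarrow> real" where
  "vol f x = sqrt (det (metric f x))"

definition divg :: "(real^2 \<Rightarrow> real^3) \<Rightarrow> (real^2 \<Rightarrow> real^2) \<Rightarrow> real^2 \<Rightarrow> real" where
  "divg f X x = (1 / vol f x) * (\<Sum>i\<in>UNIV. pd i (\<lambda>y. vol f y * X y $ i) x)"

definition christoffel :: "(real^2 \<Rightarrow> real^3) \<Rightarrow> 2 \<Rightarrow> 2 \<Rightarrow> 2 \<Rightarrow> real^2 \<Rightarrow> real" where
  "christoffel f k i j x = 1/2 * (\<Sum>l\<in>UNIV. ginv f x $ k $ l *
      (pd i (\<lambda>y. metric f y $ j $ l) x + pd j (\<lambda>y. metric f y $ i $ l) x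
       - pd l (\<lambda>y. metric f y $ i $ j) x))"

text \<open>Components R^l of R(d_i,d_j)d_k = nabla_i nabla_j d_k - nabla_j nabla_i d_k.\<close>
definition riem :: "(real^2 \<Rightarrow> real^3) \<Rightarrow> 2 \<Rightarrow> 2 \<Rightarrow> 2 \<Rightarrow> 2 \<Rightarrow> real^2 \<Rightarrow> real" where
  "riem f i j k l x =
     pd i (christoffel f l j k) x - pd j (christoffel f l i k) x
     + (\<Sum>m\<in>UNIV. christoffel f m j k x * christoffel f l i m x
                 - christoffel f m i k x * christoffel f l j m x)"

text \<open>Gauss curvature of the induced metric: sectional curvature
<R(d_1,d_2)d_2, d_1> / (g_11 g_22 - g_12^2).\<close>
definition gauss_curv :: "(real^2 \<Rightarrow> real^3) \<Rightarrow> real^2 \<Rightarrow> real" where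
  "gauss_curv f x = (\<Sum>l\<in>UNIV. riem f 1 2 2 l x * metric f x $ l $ 1) / det (metric f x)"

text \<open>Translating soliton with velocity e_3: H = - <e_3, xi>.\<close>
definition translating_soliton :: "(real^2) set \<Rightarrow> (real^2 \<Rightarrow> real^3) \<Rightarrow> bool" where
  "translating_soliton U f \<longleftrightarrow> immersion_on U f \<and>
     (\<forall>x\<in>U. mean_curv f x = - (axis 3 1 \<bullet> normal f x))"

definition height :: "(real^2 \<Rightarrow> real^3) \<Rightarrow> real^2 \<Rightarrow> real" where
  "height f x = f x \<bullet> axis 3 1"

definition Wfield :: "(real^2 \<Rightarrow> real^3) \<Rightarrow> real^2 \<Rightarrow> real^2" where
  "Wfield f x = - (1 / gin f x (grad f (height f) x) (grad f (height f) x)) *\<^sub>R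
      (grad f (mean_curv f) x + mean_curv f x *\<^sub>R grad f (height f) x)"

end

theory Submission
  imports Defs
begin

lemma pd_has: "(g has_derivative g') (at x) \<Longrightarrow> pd i g x = g' (axis i 1)"
  by (simp add: pd_def frechet_derivative_at[symmetric])

lemma diff_has: "g differentiable at x \<Longrightarrow> (g has_derivative frechet_derivative g (at x)) (at x)"
  using frechet_derivative_works by blast

lemma pd_local:
  assumes "open S" "x \<in> S" "\<And>y. y \<in> S \<Longrightarrow> g y = h y" "g differentiable at x"
  shows "pd i g x = pd i h x"
  using frechet_derivative_transform_within_open[OF assms(4,1,2)] assms(3) by (simp add: pd_def)

lemma diff_local:
  assumes "open S" "x \<in> S" "\<And>y. y \<in> S \<Longrightarrow> g y = h y" "g differentiable at x"
  shows "h differentiable at x"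
  using assms unfolding differentiable_def
  by (meson has_derivative_transform_within_open)

lemma bounded_bilinear_cross3: "bounded_bilinear (cross3 :: real^3 \<Rightarrow> real^3 \<Rightarrow> real^3)"
proof
  fix a a' b b' :: "real^3" and r :: real
  show "cross3 (a + a') b = cross3 a b + cross3 a' b" by (rule cross_add_left)
  show "cross3 a (b + b') = cross3 a b + cross3 a b'" by (rule cross_add_right)
  show "cross3 (r *\<^sub>R a) b = r *\<^sub>R cross3 a b" by (rule cross_mult_left)
  show "cross3 a (r *\<^sub>R b) = r *\<^sub>R cross3 a b" by (rule cross_mult_right)
next
  show "\<exists>K. \<forall>a b. norm (cross3 a b) \<le> norm a * norm b * K"
  proof (intro exI allI)
    fix a b :: "real^3"
    have "(norm (cross3 a b))\<^sup>2 \<le> (norm a * norm b)\<^sup>2"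
      using norm_cross[of a b] by (simp add: power_mult_distrib)
    then show "norm (cross3 a b) \<le> norm a * norm b * 1"
      using power2_le_imp_le by fastforce
  qed
qed

lemma has_derivative_cross3:
  assumes "(f has_derivative f') (at x)" "(g has_derivative g') (at x)"
  shows "((\<lambda>y. cross3 (f y) (g y)) has_derivative (\<lambda>h. cross3 (f x) (g' h) + cross3 (f' h) (g x))) (at x)"
  using bounded_bilinear.FDERIV[OF bounded_bilinear_cross3 assms] .

lemma pd_add: "f differentiable at x \<Longrightarrow> g differentiable at x \<Longrightarrow>
   pd i (\<lambda>y. f y + g y) x = pd i f x + pd i g x"
  using pd_has[OF has_derivative_add[OF diff_has diff_has], of f x g i] by (simp add: pd_def)

lemma pd_diff: "f differentiable at x \<Longrightarrow> g differentiable at x \<Longrightarrow>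
   pd i (\<lambda>y. f y - g y) x = pd i f x - pd i g x"
  using pd_has[OF has_derivative_diff[OF diff_has diff_has], of f x g i] by (simp add: pd_def)

lemma pd_minus: "f differentiable at x \<Longrightarrow> pd i (\<lambda>y. - f y) x = - pd i f x"
  using pd_has[OF has_derivative_minus[OF diff_has], of f x i] by (simp add: pd_def)

lemma pd_const: "pd i (\<lambda>y. c) x = 0"
  by (simp add: pd_def)

lemma pd_mult: "f differentiable at x \<Longrightarrow> g differentiable at x \<Longrightarrow>
   pd i (\<lambda>y. f y * g y :: real) x = pd i f x * g x + f x * pd i g x"
  using pd_has[OF has_derivative_mult[OF diff_has diff_has], of f x g i] by (simp add: pd_def)

lemma pd_scaleR: "f differentiable at x \<Longrightarrow> g differentiable at x \<Longrightarrow>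
   pd i (\<lambda>y. f y *\<^sub>R g y) x = pd i f x *\<^sub>R g x + f x *\<^sub>R pd i g x"
  using pd_has[OF has_derivative_scaleR[OF diff_has diff_has], of f x g i] by (simp add: pd_def)

lemma pd_inner: "f differentiable at x \<Longrightarrow> g differentiable at x \<Longrightarrow>
   pd i (\<lambda>y. inner (f y) (g y)) x = inner (pd i f x) (g x) + inner (f x) (pd i g x)"
  using pd_has[OF has_derivative_inner[OF diff_has diff_has], of f x g i] by (simp add: pd_def)

lemma pd_cross: "f differentiable at x \<Longrightarrow> g differentiable at x \<Longrightarrow>
   pd i (\<lambda>y. cross3 (f y) (g y)) x = cross3 (pd i f x) (g x) + cross3 (f x) (pd i g x)"
  using pd_has[OF has_derivative_cross3[OF diff_has diff_has], of f x g i] by (simp add: pd_def)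

lemma pd_nth: "f differentiable at x \<Longrightarrow> pd i (\<lambda>y. f y $ k) x = pd i f x $ k"
  using pd_has[OF bounded_linear.has_derivative[OF bounded_linear_vec_nth diff_has], of f x i k]
  by (simp add: pd_def)

lemma pd_divide: "f differentiable at x \<Longrightarrow> g differentiable at x \<Longrightarrow> g x \<noteq> 0 \<Longrightarrow>
   pd i (\<lambda>y. f y / g y :: real) x = (pd i f x * g x - f x * pd i g x) / (g x)\<^sup>2"
proof -
  assume a: "f differentiable at x" "g differentiable at x" "g x \<noteq> 0"
  note d = has_derivative_divide[OF diff_has[OF a(1)] diff_has[OF a(2)] a(3)]
  from pd_has[OF d, where i=i] show ?thesis using a(3)
    by (simp add: pd_def power2_eq_square field_simps)
qed

lemma pd_sqrt: "f differentiable at x \<Longrightarrow> f x > 0 \<Longrightarrow>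
   pd i (\<lambda>y. sqrt (f y)) x = pd i f x / (2 * sqrt (f x))"
proof -
  assume a: "f differentiable at x" "f x > 0"
  note d = has_derivative_real_sqrt[OF a(2) diff_has[OF a(1)]]
  from pd_has[OF d, where i=i] show ?thesis using a(2)
    by (simp add: pd_def field_simps)
qed

lemma pd_exp: "f differentiable at x \<Longrightarrow>
   pd i (\<lambda>y. exp (f y :: real)) x = pd i f x * exp (f x)"
proof -
  assume a: "f differentiable at x"
  note d = has_derivative_exp[OF diff_has[OF a(1)]]
  from pd_has[OF d, where i=i] show ?thesis
    by (simp add: pd_def field_simps)
qed

lemma pd_sum: "finite I \<Longrightarrow> (\<And>j. j \<in> I \<Longrightarrow> f j differentiable at x) \<Longrightarrow>
   pd i (\<lambda>y. \<Sum>j\<in>I. f j y) x = (\<Sum>j\<in>I. pd i (f j) x)"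
  using pd_has[OF has_derivative_sum[of I f "\<lambda>j. frechet_derivative (f j) (at x)"], where i=i] 
  by (simp add: pd_def diff_has)

lemma pd_id: "pd i (\<lambda>y. y) x = axis i 1"
  by (simp add: pd_def)


lemma line_deriv:
  fixes g :: "real^2 \<Rightarrow> real"
  assumes "g differentiable at (c + s *\<^sub>R A)"
  shows "((\<lambda>s. g (c + s *\<^sub>R A)) has_derivative (\<lambda>h. h * frechet_derivative g (at (c + s *\<^sub>R A)) A)) (at s within T)"
proof -
  have l: "((\<lambda>s. c + s *\<^sub>R A) has_derivative (\<lambda>h. h *\<^sub>R A)) (at s within T)"
    by (auto intro!: derivative_eq_intros)
  have "((\<lambda>s. g (c + s *\<^sub>R A)) has_derivative (\<lambda>h. frechet_derivative g (at (c + s *\<^sub>R A)) (h *\<^sub>R A))) (at s within T)"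
    by (rule has_derivative_compose[OF l diff_has[OF assms]])
  moreover have "linear (frechet_derivative g (at (c + s *\<^sub>R A)))"
    using assms linear_frechet_derivative by blast
  ultimately show ?thesis by (simp add: linear_scale)
qed

lemma schwarz_half:
  fixes g :: "real^2 \<Rightarrow> real"
  assumes dS: "\<And>y. norm (y - x) < d \<Longrightarrow> g differentiable at y"
    and P: "\<And>v. norm v < d \<Longrightarrow> \<bar>pd a g (x + v) - pd a g x - La v\<bar> \<le> e * norm v"
    and L: "linear La" and t: "0 < t" "2 * t < d"
  shows "\<bar>g (x + t *\<^sub>R axis a 1 + t *\<^sub>R axis b 1) - g (x + t *\<^sub>R axis b 1) - g (x + t *\<^sub>R axis a 1) + g x
          - t\<^sup>2 * La (axis b 1)\<bar> \<le> 3 * e * t\<^sup>2"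
proof -
  define A where "A = (axis a 1 :: real^2)"
  define B where "B = (axis b 1 :: real^2)"
  have nA: "norm A = 1" "norm B = 1" by (simp_all add: A_def B_def)
  define \<phi> where "\<phi> s = g ((x + t *\<^sub>R B) + s *\<^sub>R A) - g (x + s *\<^sub>R A)" for s
  have nv: "norm (s *\<^sub>R A + t *\<^sub>R B) \<le> 2 * t" "norm (s *\<^sub>R A) \<le> t" if "s \<in> {0..t}" for s
  proof -
    have "norm (s *\<^sub>R A + t *\<^sub>R B) \<le> norm (s *\<^sub>R A) + norm (t *\<^sub>R B)" by (rule norm_triangle_ineq)
    also have "\<dots> = \<bar>s\<bar> + \<bar>t\<bar>" using nA by simp
    finally show "norm (s *\<^sub>R A + t *\<^sub>R B) \<le> 2 * t" using that t by auto
    show "norm (s *\<^sub>R A) \<le> t" using that nA by auto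
  qed
  have der: "(\<phi> has_derivative (\<lambda>h. h * (pd a g (x + t *\<^sub>R B + s *\<^sub>R A) - pd a g (x + s *\<^sub>R A)))) (at s within {0..t})"
    if "s \<in> {0..t}" for s
  proof -
    have d1: "g differentiable at (x + t *\<^sub>R B + s *\<^sub>R A)"
      using dS[of "x + t *\<^sub>R B + s *\<^sub>R A"] nv[OF that] t by (simp add: add.commute add.left_commute)
    have d2: "g differentiable at (x + s *\<^sub>R A)"
      using dS[of "x + s *\<^sub>R A"] nv[OF that] t by simp
    show ?thesis unfolding \<phi>_def
      using has_derivative_diff[OF line_deriv[OF d1] line_deriv[OF d2]]
      by (simp add: pd_def A_def algebra_simps)
  qed
  have "\<exists>s\<in>{0..t}. \<phi> t - \<phi> 0 = (t - 0) * (pd a g (x + t *\<^sub>R B + s *\<^sub>R A) - pd a g (x + s *\<^sub>R A))"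
    by (rule mvt_very_simple) (use t der in auto)
  then obtain s where s: "s \<in> {0..t}" and mv: "\<phi> t - \<phi> 0 = t * (pd a g (x + t *\<^sub>R B + s *\<^sub>R A) - pd a g (x + s *\<^sub>R A))"
    by auto
  define v1 where "v1 = s *\<^sub>R A + t *\<^sub>R B"
  define v2 where "v2 = s *\<^sub>R A"
  have e1: "\<bar>pd a g (x + v1) - pd a g x - La v1\<bar> \<le> e * norm v1"
    using P[of v1] nv[OF s] t unfolding v1_def by auto
  have e2: "\<bar>pd a g (x + v2) - pd a g x - La v2\<bar> \<le> e * norm v2"
    using P[of v2] nv[OF s] t unfolding v2_def by auto
  have e0: "e \<ge> 0"
  proof -
    have "\<bar>pd a g (x + 0) - pd a g x - La 0\<bar> \<le> e * norm (0::real^2)" using P[of 0] t by simp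
    have "\<bar>pd a g (x + v1) - pd a g x - La v1\<bar> \<ge> 0" by simp
    show ?thesis
    proof (rule ccontr)
      assume "\<not> e \<ge> 0"
      hence "e < 0" by simp
      have "norm v1 > 0"
      proof -
        have "v1 $ b \<noteq> 0 \<or> v1 $ a \<noteq> 0" 
          using t s by (auto simp: v1_def A_def B_def axis_def)
        thus ?thesis by auto
      qed
      hence "e * norm v1 < 0" using \<open>e < 0\<close> by (simp add: mult_neg_pos)
      thus False using e1 by linarith
    qed
  qed
  have lin: "La v1 - La v2 = t * La B" using L unfolding v1_def v2_def
    by (simp add: linear_add linear_scale)
  have "pd a g (x + t *\<^sub>R B + s *\<^sub>R A) - pd a g (x + s *\<^sub>R A)
      = (pd a g (x + v1) - pd a g x - La v1) - (pd a g (x + v2) - pd a g x - La v2) + t * La B"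
    using lin unfolding v1_def v2_def by (simp add: algebra_simps)
  hence "\<bar>pd a g (x + t *\<^sub>R B + s *\<^sub>R A) - pd a g (x + s *\<^sub>R A) - t * La B\<bar> \<le> e * norm v1 + e * norm v2"
    using e1 e2 by linarith
  also have "\<dots> \<le> e * (2 * t) + e * t"
    using nv[OF s] e0 unfolding v1_def v2_def by (intro add_mono mult_left_mono) auto
  finally have bd: "\<bar>pd a g (x + t *\<^sub>R B + s *\<^sub>R A) - pd a g (x + s *\<^sub>R A) - t * La B\<bar> \<le> 3 * e * t" by simp
  have "\<phi> t - \<phi> 0 - t\<^sup>2 * La B = t * (pd a g (x + t *\<^sub>R B + s *\<^sub>R A) - pd a g (x + s *\<^sub>R A) - t * La B)"
    using mv by (simp add: power2_eq_square algebra_simps)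
  hence "\<bar>\<phi> t - \<phi> 0 - t\<^sup>2 * La B\<bar> = t * \<bar>pd a g (x + t *\<^sub>R B + s *\<^sub>R A) - pd a g (x + s *\<^sub>R A) - t * La B\<bar>"
    using t by (simp add: abs_mult)
  also have "\<dots> \<le> t * (3 * e * t)" using bd t by (intro mult_left_mono) auto
  finally show ?thesis unfolding \<phi>_def A_def B_def by (simp add: power2_eq_square algebra_simps)
qed

lemma schwarz:
  fixes g :: "real^2 \<Rightarrow> real"
  assumes S: "open S" "x \<in> S" "\<And>y. y \<in> S \<Longrightarrow> g differentiable at y"
    and da: "pd a g differentiable at x" and db: "pd b g differentiable at x"
  shows "pd b (pd a g) x = pd a (pd b g) x"
proof -
  define La where "La = frechet_derivative (pd a g) (at x)"
  define Lb where "Lb = frechet_derivative (pd b g) (at x)"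
  have Ha: "(pd a g has_derivative La) (at x)" using da La_def diff_has by blast
  have Hb: "(pd b g has_derivative Lb) (at x)" using db Lb_def diff_has by blast
  have lin: "linear La" "linear Lb" using Ha Hb has_derivative_linear by blast+
  obtain d0 where d0: "d0 > 0" "ball x d0 \<subseteq> S" using S openE by blast
  have main: "\<bar>La (axis b 1) - Lb (axis a 1)\<bar> \<le> 6 * e" if e: "e > 0" for e
  proof -
    obtain da' where da': "da' > 0" "\<And>y. norm (y - x) < da' \<Longrightarrow> norm (pd a g y - pd a g x - La (y - x)) \<le> e * norm (y - x)"
      using Ha e unfolding has_derivative_at_alt by blast
    obtain db' where db': "db' > 0" "\<And>y. norm (y - x) < db' \<Longrightarrow> norm (pd b g y - pd b g x - Lb (y - x)) \<le> e * norm (y - x)"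
      using Hb e unfolding has_derivative_at_alt by blast
    define d where "d = min d0 (min da' db')"
    have d: "d > 0" using d0 da' db' by (simp add: d_def)
    define t where "t = d / 4"
    have t: "0 < t" "2 * t < d" using d by (simp_all add: t_def)
    have dS: "g differentiable at y" if "norm (y - x) < d" for y
      using that d0 S(3) unfolding d_def by (auto simp: dist_norm norm_minus_commute)
    have h1: "\<bar>g (x + t *\<^sub>R axis a 1 + t *\<^sub>R axis b 1) - g (x + t *\<^sub>R axis b 1) - g (x + t *\<^sub>R axis a 1) + g x
          - t\<^sup>2 * La (axis b 1)\<bar> \<le> 3 * e * t\<^sup>2"
      apply (rule schwarz_half[OF dS _ lin(1) t])
      using da'(2)[of "x + v" for v] unfolding d_def by auto
    have h2: "\<bar>g (x + t *\<^sub>R axis b 1 + t *\<^sub>R axis a 1) - g (x + t *\<^sub>R axis a 1) - g (x + t *\<^sub>R axis b 1) + g x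
          - t\<^sup>2 * Lb (axis a 1)\<bar> \<le> 3 * e * t\<^sup>2"
      apply (rule schwarz_half[OF dS _ lin(2) t])
      using db'(2)[of "x + v" for v] unfolding d_def by auto
    define G where "G = g (x + t *\<^sub>R axis a 1 + t *\<^sub>R axis b 1) - g (x + t *\<^sub>R axis b 1) - g (x + t *\<^sub>R axis a 1) + g x"
    have h2': "\<bar>G - t\<^sup>2 * Lb (axis a 1)\<bar> \<le> 3 * e * t\<^sup>2"
      using h2 unfolding G_def by (simp add: add.commute add.left_commute diff_diff_eq)
    have h1': "\<bar>G - t\<^sup>2 * La (axis b 1)\<bar> \<le> 3 * e * t\<^sup>2" using h1 unfolding G_def .
    have "\<bar>t\<^sup>2 * (La (axis b 1) - Lb (axis a 1))\<bar> \<le> t\<^sup>2 * (6 * e)"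
      using h1' h2' by (simp add: abs_le_iff algebra_simps) 
    hence "t\<^sup>2 * \<bar>La (axis b 1) - Lb (axis a 1)\<bar> \<le> t\<^sup>2 * (6 * e)"
      by (simp add: abs_mult)
    thus ?thesis using t by (simp add: power2_eq_square)
  qed
  have "La (axis b 1) = Lb (axis a 1)"
  proof (rule ccontr)
    assume ne: "La (axis b 1) \<noteq> Lb (axis a 1)"
    define e where "e = \<bar>La (axis b 1) - Lb (axis a 1)\<bar> / 12"
    have "e > 0" using ne by (simp add: e_def)
    from main[OF this] show False using ne unfolding e_def by simp
  qed
  thus ?thesis by (simp add: pd_def La_def Lb_def)
qed


lemma dI: "(h has_derivative D) (at x) \<Longrightarrow> h differentiable at x"
  by (rule differentiableI)

lemma diff_add[simp]: "f differentiable at x \<Longrightarrow> g differentiable at x \<Longrightarrow> (\<lambda>y. f y + g y) differentiable at x"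
  by (rule dI, rule has_derivative_add, (rule diff_has, assumption)+)
lemma diff_diff[simp]: "f differentiable at x \<Longrightarrow> g differentiable at x \<Longrightarrow> (\<lambda>y. f y - g y) differentiable at x"
  by (rule dI, rule has_derivative_diff, (rule diff_has, assumption)+)
lemma diff_minus[simp]: "f differentiable at x \<Longrightarrow> (\<lambda>y. - f y) differentiable at x"
  by (rule dI, rule has_derivative_minus, (rule diff_has, assumption)+)
lemma diff_const[simp]: "(\<lambda>y. c) differentiable at x"
  by simp
lemma diff_mult[simp]: "f differentiable at x \<Longrightarrow> g differentiable at x \<Longrightarrow> (\<lambda>y. f y * g y :: real) differentiable at x"
  by (rule dI, rule has_derivative_mult, (rule diff_has, assumption)+)
lemma diff_scaleR[simp]: "f differentiable at x \<Longrightarrow> g differentiable at x \<Longrightarrow> (\<lambda>y. f y *\<^sub>R g y) differentiable at x"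
  by (rule dI, rule has_derivative_scaleR, (rule diff_has, assumption)+)
lemma diff_inner[simp]: "f differentiable at x \<Longrightarrow> g differentiable at x \<Longrightarrow> (\<lambda>y. inner (f y) (g y)) differentiable at x"
  by (rule dI, rule has_derivative_inner, (rule diff_has, assumption)+)
lemma diff_cross[simp]: "f differentiable at x \<Longrightarrow> g differentiable at x \<Longrightarrow> (\<lambda>y. cross3 (f y) (g y)) differentiable at x"
  by (rule dI, rule has_derivative_cross3, (rule diff_has, assumption)+)
lemma diff_nth[simp]: "f differentiable at x \<Longrightarrow> (\<lambda>y. f y $ k) differentiable at x"
  by (rule dI, rule bounded_linear.has_derivative[OF bounded_linear_vec_nth], rule diff_has)
lemma diff_divide[simp]: "f differentiable at x \<Longrightarrow> g differentiable at x \<Longrightarrow> g x \<noteq> 0 \<Longrightarrow> (\<lambda>y. f y / g y :: real) differentiable at x"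
  by (rule dI, rule has_derivative_divide, (rule diff_has, assumption)+)
lemma diff_sqrt[simp]: "f differentiable at x \<Longrightarrow> f x > 0 \<Longrightarrow> (\<lambda>y. sqrt (f y)) differentiable at x"
  by (rule dI, rule has_derivative_real_sqrt, assumption, rule diff_has)
lemma diff_exp[simp]: "f differentiable at x \<Longrightarrow> (\<lambda>y. exp (f y :: real)) differentiable at x"
  by (rule dI, rule has_derivative_exp, rule diff_has)
lemma diff_sum[simp]: "finite I \<Longrightarrow> (\<And>j. j \<in> I \<Longrightarrow> f j differentiable at x) \<Longrightarrow> (\<lambda>y. \<Sum>j\<in>I. f j y) differentiable at x"
  by (rule dI, rule has_derivative_sum, rule diff_has, auto)

lemma schwarz_vec:
  fixes g :: "real^2 \<Rightarrow> real^'n"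
  assumes S: "open S" "x \<in> S" "\<And>y. y \<in> S \<Longrightarrow> g differentiable at y"
    and da: "pd a g differentiable at x" and db: "pd b g differentiable at x"
  shows "pd b (pd a g) x = pd a (pd b g) x"
proof -
  have "pd b (pd a g) x $ k = pd a (pd b g) x $ k" for k
  proof -
    define gk where "gk = (\<lambda>y. g y $ k)"
    have dk: "gk differentiable at y" if "y \<in> S" for y using S(3)[OF that] by (simp add: gk_def)
    have ea: "pd a gk y = pd a g y $ k" if "y \<in> S" for y unfolding gk_def using pd_nth S(3)[OF that] by blast
    have eb: "pd b gk y = pd b g y $ k" if "y \<in> S" for y unfolding gk_def using pd_nth S(3)[OF that] by blast
    have dak: "pd a gk differentiable at x"
      by (rule diff_local[OF S(1,2), of "\<lambda>y. pd a g y $ k"]) (use ea da in auto)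
    have dbk: "pd b gk differentiable at x"
      by (rule diff_local[OF S(1,2), of "\<lambda>y. pd b g y $ k"]) (use eb db in auto)
    have "pd b (pd a gk) x = pd a (pd b gk) x" by (rule schwarz[OF S(1,2) dk dak dbk])
    moreover have "pd b (pd a gk) x = pd b (pd a g) x $ k"
      using pd_local[OF S(1,2), of "\<lambda>y. pd a g y $ k" "pd a gk" b] ea da pd_nth[OF da] by auto
    moreover have "pd a (pd b gk) x = pd a (pd b g) x $ k"
      using pd_local[OF S(1,2), of "\<lambda>y. pd b g y $ k" "pd b gk" a] eb db pd_nth[OF db] by auto
    ultimately show ?thesis by simp
  qed
  thus ?thesis by (simp add: vec_eq_iff)
qed


definition adj2 :: "real^2^2 \<Rightarrow> 2 \<Rightarrow> 2 \<Rightarrow> real" where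
  "adj2 M i j = (if i = 1 then (if j = 1 then M$2$2 else - M$1$2) else (if j = 1 then - M$2$1 else M$1$1))"

lemma two_ne[simp]: "(1::2) \<noteq> 2" "(2::2) \<noteq> 1" by auto

lemma matrix_inv_2:
  fixes M :: "real^2^2"
  assumes "det M \<noteq> 0"
  shows "matrix_inv M = (\<chi> i j. adj2 M i j / det M)"
proof -
  define B where "B = (\<chi> i j. adj2 M i j / det M)"
  have 1: "M ** B = mat 1" "B ** M = mat 1"
    using assms unfolding B_def
     apply (auto simp: matrix_matrix_mult_def mat_def vec_eq_iff forall_2 sum_2 det_2 adj2_def field_simps)
    by algebra+
  have "M ** matrix_inv M = mat 1 \<and> matrix_inv M ** M = mat 1"
    unfolding matrix_inv_def by (rule someI[of _ B]) (use 1 in auto)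
  hence "matrix_inv M = matrix_inv M ** (M ** B)" using 1 by simp
  also have "\<dots> = B" using \<open>M ** matrix_inv M = mat 1 \<and> matrix_inv M ** M = mat 1\<close>
    by (simp add: matrix_mul_assoc)
  finally show ?thesis unfolding B_def .
qed

context
  fixes U :: "(real^2) set" and f :: "real^2 \<Rightarrow> real^3"
  assumes imm: "immersion_on U f"
begin

lemma openU: "open U" using imm by (simp add: immersion_on_def)

lemma sm: "smooth_on U f" using imm by (simp add: immersion_on_def)

lemma d0: "y \<in> U \<Longrightarrow> f differentiable at y"
  using sm unfolding smooth_on_def by (metis foldr.simps(1) id_apply)
lemma d1: "y \<in> U \<Longrightarrow> pd i f differentiable at y"
  using sm unfolding smooth_on_def by (drule_tac x="[i]" in spec) simp
lemma d2: "y \<in> U \<Longrightarrow> pd i (pd j f) differentiable at y"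
  using sm unfolding smooth_on_def by (drule_tac x="[i,j]" in spec) simp
lemma d3: "y \<in> U \<Longrightarrow> pd k (pd i (pd j f)) differentiable at y"
  using sm unfolding smooth_on_def by (drule_tac x="[k,i,j]" in spec) simp

lemma Nnz: "y \<in> U \<Longrightarrow> cross3 (pd 1 f y) (pd 2 f y) \<noteq> 0"
  using imm by (simp add: immersion_on_def)

lemma sym2: "y \<in> U \<Longrightarrow> pd i (pd j f) y = pd j (pd i f) y"
  by (rule schwarz_vec[OF openU _ d0 d1 d1])

lemma sym3a: "y \<in> U \<Longrightarrow> pd i (pd j (pd k f)) y = pd j (pd i (pd k f)) y"
  by (rule schwarz_vec[OF openU _ d1 d2 d2])

lemma sym3b: "y \<in> U \<Longrightarrow> pd i (pd j (pd k f)) y = pd i (pd k (pd j f)) y"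
  by (rule pd_local[OF openU _ sym2 d2])

end


lemmas rawsimps = inner_vec_def sum_3 cross_components vector_add_component inner_real_def

lemma R_psi:
  fixes e1 e2 :: "real^3"
  shows "(cross3 e1 e2 $ 1)\<^sup>2 + (cross3 e1 e2 $ 2)\<^sup>2 =
     (e1$3)\<^sup>2 * (e2 \<bullet> e2) - 2 * (e1$3) * (e2$3) * (e1 \<bullet> e2) + (e2$3)\<^sup>2 * (e1 \<bullet> e1)"
  by (simp only: rawsimps) algebra

lemma R_W1:
  fixes e1 e2 f11 f12 f22 :: "real^3"
  defines "N \<equiv> cross3 e1 e2"
  defines "D \<equiv> N \<bullet> N"
  defines "dN1 \<equiv> cross3 f11 e2 + cross3 e1 f12"
  defines "dN2 \<equiv> cross3 f12 e2 + cross3 e1 f22"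
  defines "b1 \<equiv> - (dN1 $ 3) * D + N $ 3 * (N \<bullet> dN1)"
  defines "b2 \<equiv> - (dN2 $ 3) * D + N $ 3 * (N \<bullet> dN2)"
  defines "t \<equiv> - ((e2 \<bullet> e2) * (f11 \<bullet> N) - 2 * (e1 \<bullet> e2) * (f12 \<bullet> N) + (e1 \<bullet> e1) * (f22 \<bullet> N))"
  shows "- ((e2 \<bullet> e2) * b1 - (e1 \<bullet> e2) * b2 + t * ((e2 \<bullet> e2) * e1$3 - (e1 \<bullet> e2) * e2$3))
     = ((f22 \<bullet> N) * e1$3 - (f12 \<bullet> N) * e2$3) * D"
    and "- (- (e1 \<bullet> e2) * b1 + (e1 \<bullet> e1) * b2 + t * (- (e1 \<bullet> e2) * e1$3 + (e1 \<bullet> e1) * e2$3))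
     = ((f11 \<bullet> N) * e2$3 - (f12 \<bullet> N) * e1$3) * D"
  unfolding N_def D_def dN1_def dN2_def b1_def b2_def t_def
  by (simp only: rawsimps; algebra)+

lemma R_c3:
  fixes e1 e2 f11 f12 f22 :: "real^3"
  defines "N \<equiv> cross3 e1 e2"
  defines "D \<equiv> N \<bullet> N"
  defines "dN1 \<equiv> cross3 f11 e2 + cross3 e1 f12"
  defines "dN2 \<equiv> cross3 f12 e2 + cross3 e1 f22"
  defines "b1 \<equiv> - (dN1 $ 3) * D + N $ 3 * (N \<bullet> dN1)"
  defines "b2 \<equiv> - (dN2 $ 3) * D + N $ 3 * (N \<bullet> dN2)"
  shows "b1 * ((f22 \<bullet> N) * e1$3 - (f12 \<bullet> N) * e2$3) + b2 * ((f11 \<bullet> N) * e2$3 - (f12 \<bullet> N) * e1$3)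
     = ((f11 \<bullet> N) * (f22 \<bullet> N) - (f12 \<bullet> N)\<^sup>2) * ((N$1)\<^sup>2 + (N$2)\<^sup>2)"
  unfolding N_def D_def dN1_def dN2_def b1_def b2_def
  by (simp only: rawsimps power2_eq_square) algebra


definition NN :: "(real^2 \<Rightarrow> real^3) \<Rightarrow> real^2 \<Rightarrow> real^3" where
  "NN f y = cross3 (pd 1 f y) (pd 2 f y)"
definition DD :: "(real^2 \<Rightarrow> real^3) \<Rightarrow> real^2 \<Rightarrow> real" where
  "DD f y = NN f y \<bullet> NN f y"

lemma metric_nth[simp]: "metric f y $ i $ j = pd i f y \<bullet> pd j f y"
  by (simp add: metric_def)

lemma det_metric: "det (metric f y) = DD f y"
  by (simp add: det_2 DD_def NN_def dot_cross inner_commute)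

context
  fixes U :: "(real^2) set" and f :: "real^2 \<Rightarrow> real^3"
  assumes imm: "immersion_on U f"
begin

lemma DDpos: "y \<in> U \<Longrightarrow> DD f y > 0"
  using Nnz[OF imm] by (simp add: DD_def NN_def)

lemma ginv_eq: "y \<in> U \<Longrightarrow> ginv f y $ k $ l = adj2 (metric f y) k l / DD f y"
  using DDpos[of y] by (simp add: ginv_def matrix_inv_2 det_metric)

lemma chr_eq: assumes y: "y \<in> U"
  shows "christoffel f k i j y = (\<Sum>l\<in>UNIV. adj2 (metric f y) k l / DD f y * (pd i (pd j f) y \<bullet> pd l f y))"
proof -
  have pm: "pd a (\<lambda>z. metric f z $ b $ c) y = pd a (pd b f) y \<bullet> pd c f y + pd b f y \<bullet> pd a (pd c f) y" for a b c
    using pd_inner[OF d1[OF imm y] d1[OF imm y], of a b c] by simp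
  have "pd i (\<lambda>z. metric f z $ j $ l) y + pd j (\<lambda>z. metric f z $ i $ l) y - pd l (\<lambda>z. metric f z $ i $ j) y
     = 2 * (pd i (pd j f) y \<bullet> pd l f y)" for l
    unfolding pm using sym2[OF imm y, of i j] sym2[OF imm y, of i l] sym2[OF imm y, of j l]
    by (simp add: inner_commute)
  thus ?thesis unfolding christoffel_def ginv_eq[OF y]
    by (simp add: sum_distrib_left)
qed

end


lemmas pdr = pd_add pd_diff pd_minus pd_mult pd_divide pd_inner pd_cross pd_nth pd_const pd_scaleR pd_sqrt pd_exp

context
  fixes U :: "(real^2) set" and f :: "real^2 \<Rightarrow> real^3"
  assumes imm: "immersion_on U f"
begin

lemma dadj: "y \<in> U \<Longrightarrow> (\<lambda>z. adj2 (metric f z) k l) differentiable at y"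
  using d1[OF imm] exhaust_2[of k] exhaust_2[of l] by (auto simp: adj2_def)

lemma dNN: "y \<in> U \<Longrightarrow> NN f differentiable at y"
  unfolding NN_def[abs_def] using d1[OF imm] by simp

lemma dDD: "y \<in> U \<Longrightarrow> DD f differentiable at y"
  unfolding DD_def[abs_def] NN_def using d1[OF imm] by simp

lemma pd_NN: "y \<in> U \<Longrightarrow> pd a (NN f) y = cross3 (pd a (pd 1 f) y) (pd 2 f y) + cross3 (pd 1 f y) (pd a (pd 2 f) y)"
  unfolding NN_def[abs_def] using d1[OF imm] pd_cross by blast

lemma pd_DD: "y \<in> U \<Longrightarrow> pd a (DD f) y = 2 * (NN f y \<bullet> (cross3 (pd a (pd 1 f) y) (pd 2 f y) + cross3 (pd 1 f y) (pd a (pd 2 f) y)))"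
  unfolding DD_def[abs_def] using dNN pd_inner[of "NN f" y "NN f" a] pd_NN 
  by (simp add: inner_commute)

lemma pd_chr: assumes y: "y \<in> U"
  shows "pd a (christoffel f k i j) y = pd a (\<lambda>z. \<Sum>l\<in>UNIV. adj2 (metric f z) k l / DD f z * (pd i (pd j f) z \<bullet> pd l f z)) y"
  apply (rule pd_local[OF openU[OF imm] y, symmetric])
  using chr_eq[OF imm] apply simp
  using dadj[OF y] dDD[OF y] d1[OF imm y] d2[OF imm y] DDpos[OF imm y] by simp

lemma symx: assumes x: "x \<in> U"
  shows "pd 2 (pd 1 f) x = pd 1 (pd 2 f) x"
   "pd 2 (pd 1 (pd 1 f)) x = pd 1 (pd 1 (pd 2 f)) x"
   "pd 1 (pd 2 (pd 1 f)) x = pd 1 (pd 1 (pd 2 f)) x"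
   "pd 2 (pd 1 (pd 2 f)) x = pd 1 (pd 2 (pd 2 f)) x"
   "pd 2 (pd 2 (pd 1 f)) x = pd 1 (pd 2 (pd 2 f)) x"
  using sym2[OF imm x] sym3a[OF imm x] sym3b[OF imm x] by metis+

end


lemma R_gram:
  fixes a b e1 e2 :: "real^3"
  shows "(a \<bullet> cross3 e1 e2) * (b \<bullet> cross3 e1 e2) =
    (a \<bullet> b) * ((e1 \<bullet> e1) * (e2 \<bullet> e2) - (e1 \<bullet> e2) * (e1 \<bullet> e2))
    - (a \<bullet> e1) * ((e1 \<bullet> b) * (e2 \<bullet> e2) - (e1 \<bullet> e2) * (e2 \<bullet> b))
    + (a \<bullet> e2) * ((e1 \<bullet> b) * (e1 \<bullet> e2) - (e1 \<bullet> e1) * (e2 \<bullet> b))"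
  by (simp only: rawsimps) algebra

context
  fixes U :: "(real^2) set" and f :: "real^2 \<Rightarrow> real^3"
  assumes imm: "immersion_on U f"
begin

lemma gauss_eq: assumes x: "x \<in> U" shows "gauss_curv f x = 
   ((pd 1 (pd 1 f) x \<bullet> NN f x) * (pd 2 (pd 2 f) x \<bullet> NN f x) - (pd 1 (pd 2 f) x \<bullet> NN f x)\<^sup>2) / (DD f x)\<^sup>2"
proof -
  have DDe: "DD f x = (pd 1 f x \<bullet> pd 1 f x) * (pd 2 f x \<bullet> pd 2 f x) - (pd 1 f x \<bullet> pd 2 f x) * (pd 1 f x \<bullet> pd 2 f x)"
    by (simp add: DD_def NN_def dot_cross inner_commute)
  define g11 where "g11 = pd 1 f x \<bullet> pd 1 f x"
  define g12 where "g12 = pd 1 f x \<bullet> pd 2 f x"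
  define g22 where "g22 = pd 2 f x \<bullet> pd 2 f x"
  define p111 where "p111 = pd 1 f x \<bullet> pd 1 (pd 1 f) x"
  define p112 where "p112 = pd 1 (pd 1 f) x \<bullet> pd 2 f x"
  define p121 where "p121 = pd 1 f x \<bullet> pd 1 (pd 2 f) x"
  define p122 where "p122 = pd 2 f x \<bullet> pd 1 (pd 2 f) x"
  define p221 where "p221 = pd 1 f x \<bullet> pd 2 (pd 2 f) x"
  define p222 where "p222 = pd 2 f x \<bullet> pd 2 (pd 2 f) x"
  define q1 where "q1 = pd 1 (pd 1 f) x \<bullet> pd 2 (pd 2 f) x"
  define q2 where "q2 = pd 1 (pd 2 f) x \<bullet> pd 1 (pd 2 f) x"
  define q3 where "q3 = pd 1 (pd 2 f) x \<bullet> pd 2 (pd 2 f) x"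
  define q4 where "q4 = pd 1 (pd 1 f) x \<bullet> pd 1 (pd 2 f) x"
  define t1 where "t1 = pd 1 f x \<bullet> pd 1 (pd 2 (pd 2 f)) x"
  define t2 where "t2 = pd 2 f x \<bullet> pd 1 (pd 2 (pd 2 f)) x"
  define t3 where "t3 = pd 1 f x \<bullet> pd 1 (pd 1 (pd 2 f)) x"
  define t4 where "t4 = pd 2 f x \<bullet> pd 1 (pd 1 (pd 2 f)) x"
  define Dv where "Dv = g11 * g22 - g12 * g12"
  have Dn: "Dv \<noteq> 0" unfolding Dv_def using DDpos[OF imm x] DDe unfolding g11_def g12_def g22_def by simp
  show ?thesis
  using x apply (simp add: gauss_curv_def riem_def sum_2 pd_chr[OF imm] chr_eq[OF imm] det_metric)
  apply (simp add: adj2_def)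
  apply (simp add: pdr d0[OF imm] d1[OF imm] d2[OF imm] d3[OF imm] dDD[OF imm] dNN[OF imm] DDpos[OF imm] less_imp_neq[OF DDpos[OF imm], symmetric] pd_DD[OF imm] symx[OF imm])
  apply (simp only: power2_eq_square R_gram NN_def inner_add_right dot_cross DDe)
  apply (simp only: inner_commute)
  apply (simp only: g11_def[symmetric] g12_def[symmetric] g22_def[symmetric] p111_def[symmetric] p112_def[symmetric]
     p121_def[symmetric] p122_def[symmetric] p221_def[symmetric] p222_def[symmetric] q1_def[symmetric] q2_def[symmetric] q3_def[symmetric] q4_def[symmetric]
     t1_def[symmetric] t2_def[symmetric] t3_def[symmetric] t4_def[symmetric])
  apply (simp only: Dv_def[symmetric])
  using Dn apply (simp add: field_simps)
  apply (simp only: Dv_def)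
  apply algebra
  done
qed

end


definition tauD :: "(real^2 \<Rightarrow> real^3) \<Rightarrow> real^2 \<Rightarrow> real" where
  "tauD f y = - ((pd 2 f y \<bullet> pd 2 f y) * (pd 1 (pd 1 f) y \<bullet> NN f y)
       - 2 * (pd 1 f y \<bullet> pd 2 f y) * (pd 1 (pd 2 f) y \<bullet> NN f y)
       + (pd 1 f y \<bullet> pd 1 f y) * (pd 2 (pd 2 f) y \<bullet> NN f y))"

definition dNk :: "(real^2 \<Rightarrow> real^3) \<Rightarrow> 2 \<Rightarrow> real^2 \<Rightarrow> real^3" where
  "dNk f k y = cross3 (pd k (pd 1 f) y) (pd 2 f y) + cross3 (pd 1 f y) (pd k (pd 2 f) y)"

definition betaD :: "(real^2 \<Rightarrow> real^3) \<Rightarrow> 2 \<Rightarrow> real^2 \<Rightarrow> real" where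
  "betaD f k y = - (dNk f k y $ 3) * DD f y + NN f y $ 3 * (NN f y \<bullet> dNk f k y)"

lemma pd_nth3: "pd k f y $ 3 = pd k f y \<bullet> axis 3 1" by (simp add: inner_axis)

context
  fixes U :: "(real^2) set" and f :: "real^2 \<Rightarrow> real^3"
  assumes sol: "translating_soliton U f"
begin

lemma imm: "immersion_on U f" using sol by (simp add: translating_soliton_def)

lemma normal_eq: "normal f y = (1 / sqrt (DD f y)) *\<^sub>R NN f y"
  by (simp add: normal_def NN_def DD_def norm_eq_sqrt_inner)

lemma vol_eq: "vol f y = sqrt (DD f y)"
  by (simp add: vol_def det_metric)

lemma sqDD: "y \<in> U \<Longrightarrow> sqrt (DD f y) > 0" using DDpos[OF imm] by simp

lemma ss: "y \<in> U \<Longrightarrow> sqrt (DD f y) * sqrt (DD f y) = DD f y" 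
  "y \<in> U \<Longrightarrow> sqrt (DD f y) * (sqrt (DD f y) * z) = DD f y * z"
  using DDpos[OF imm, of y] by (simp_all add: mult.assoc[symmetric])

lemma H_tr: assumes y: "y \<in> U"
  shows "mean_curv f y = tauD f y / (DD f y * sqrt (DD f y))"
  using y sym2[OF imm y, of 2 1] DDpos[OF imm y] sqDD[OF y]
  by (simp add: mean_curv_def sum_2 ginv_eq[OF imm y] sff_def normal_eq adj2_def tauD_def field_simps inner_commute ss)

lemma H_sol: assumes y: "y \<in> U"
  shows "mean_curv f y = - (NN f y $ 3) / sqrt (DD f y)"
  using sol y by (simp add: translating_soliton_def normal_eq inner_axis')

lemma dHsol: "y \<in> U \<Longrightarrow> (\<lambda>z. - (NN f z $ 3) / sqrt (DD f z)) differentiable at y"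
  using dNN[OF imm, of y] dDD[OF imm, of y] DDpos[OF imm, of y] by simp

lemma dH: "y \<in> U \<Longrightarrow> mean_curv f differentiable at y"
  by (rule diff_local[OF openU[OF imm] _ _ dHsol]) (auto simp: H_sol)

lemma pd_H: assumes y: "y \<in> U"
  shows "pd k (mean_curv f) y = betaD f k y / (DD f y * sqrt (DD f y))"
proof -
  have "pd k (mean_curv f) y = pd k (\<lambda>z. - (NN f z $ 3) / sqrt (DD f z)) y"
    by (rule pd_local[OF openU[OF imm] y _ dH[OF y]]) (simp add: H_sol)
  also have "\<dots> = betaD f k y / (DD f y * sqrt (DD f y))"
    using y DDpos[OF imm y] sqDD[OF y]
    by (simp add: pdr dNN[OF imm] dDD[OF imm] pd_NN[OF imm] pd_DD[OF imm] betaD_def dNk_def field_simps ss)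
  finally show ?thesis .
qed

lemma dheight: "y \<in> U \<Longrightarrow> height f differentiable at y"
  unfolding height_def[abs_def] using d0[OF imm] by simp

lemma pd_height: "y \<in> U \<Longrightarrow> pd k (height f) y = pd k f y $ 3"
  unfolding height_def[abs_def] using d0[OF imm] by (simp add: pdr inner_axis)

end


definition psi :: "(real^2 \<Rightarrow> real^3) \<Rightarrow> real^2 \<Rightarrow> real" where
  "psi f y = (NN f y $ 1)\<^sup>2 + (NN f y $ 2)\<^sup>2"

definition PP :: "(real^2 \<Rightarrow> real^3) \<Rightarrow> 2 \<Rightarrow> real^2 \<Rightarrow> real" where
  "PP f i y = (if i = 1 then (pd 2 (pd 2 f) y \<bullet> NN f y) * (pd 1 f y $ 3) - (pd 1 (pd 2 f) y \<bullet> NN f y) * (pd 2 f y $ 3)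
     else (pd 1 (pd 1 f) y \<bullet> NN f y) * (pd 2 f y $ 3) - (pd 1 (pd 2 f) y \<bullet> NN f y) * (pd 1 f y $ 3))"

definition YY :: "(real^2 \<Rightarrow> real^3) \<Rightarrow> 2 \<Rightarrow> real^2 \<Rightarrow> real" where
  "YY f i y = PP f i y / psi f y"

lemma grad_nth: "grad f \<phi> y $ i = (\<Sum>j\<in>UNIV. ginv f y $ i $ j * pd j \<phi> y)"
  by (simp add: grad_def matrix_vector_mult_def)

lemma gin_eq: "gin f y X Y = (\<Sum>i\<in>UNIV. X $ i * (\<Sum>j\<in>UNIV. metric f y $ i $ j * Y $ j))"
  by (simp add: gin_def inner_vec_def matrix_vector_mult_def)

context
  fixes U :: "(real^2) set" and f :: "real^2 \<Rightarrow> real^3"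
  assumes sol: "translating_soliton U f"
begin

lemma psi_raw: "psi f y = (pd 1 f y $ 3)\<^sup>2 * (pd 2 f y \<bullet> pd 2 f y) - 2 * (pd 1 f y $ 3) * (pd 2 f y $ 3) * (pd 1 f y \<bullet> pd 2 f y)
    + (pd 2 f y $ 3)\<^sup>2 * (pd 1 f y \<bullet> pd 1 f y)"
  unfolding psi_def NN_def by (rule R_psi)

lemma W_raw: assumes y: "y \<in> U"
  shows "- ((pd 2 f y \<bullet> pd 2 f y) * betaD f 1 y - (pd 1 f y \<bullet> pd 2 f y) * betaD f 2 y
     + tauD f y * ((pd 2 f y \<bullet> pd 2 f y) * (pd 1 f y $ 3) - (pd 1 f y \<bullet> pd 2 f y) * (pd 2 f y $ 3))) = PP f 1 y * DD f y"
   and "- (- (pd 1 f y \<bullet> pd 2 f y) * betaD f 1 y + (pd 1 f y \<bullet> pd 1 f y) * betaD f 2 y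
     + tauD f y * (- (pd 1 f y \<bullet> pd 2 f y) * (pd 1 f y $ 3) + (pd 1 f y \<bullet> pd 1 f y) * (pd 2 f y $ 3))) = PP f 2 y * DD f y"
  unfolding betaD_def tauD_def PP_def dNk_def DD_def NN_def sym2[OF imm[OF sol] y, of 2 1]
  by (simp_all only: if_P[OF refl] if_not_P[OF two_ne(2)]) (rule R_W1)+

lemma phi_eq: assumes y: "y \<in> U"
  shows "gin f y (grad f (height f) y) (grad f (height f) y) = psi f y / DD f y"
proof -
  have DDe: "DD f y = (pd 1 f y \<bullet> pd 1 f y) * (pd 2 f y \<bullet> pd 2 f y) - (pd 1 f y \<bullet> pd 2 f y) * (pd 1 f y \<bullet> pd 2 f y)"
    by (simp add: DD_def NN_def dot_cross inner_commute)
  have Dn: "DD f y \<noteq> 0" using DDpos[OF imm[OF sol] y] by simp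
  show ?thesis
    using Dn unfolding psi_raw
    apply (simp add: gin_eq grad_nth sum_2 ginv_eq[OF imm[OF sol] y] adj2_def pd_height[OF sol y] field_simps inner_commute)
    apply (simp add: DDe)
    apply algebra
    done
qed

lemma volW: assumes y: "y \<in> U" and p: "psi f y \<noteq> 0"
  shows "vol f y * Wfield f y $ i = YY f i y"
proof -
  have DDe: "DD f y = (pd 1 f y \<bullet> pd 1 f y) * (pd 2 f y \<bullet> pd 2 f y) - (pd 1 f y \<bullet> pd 2 f y) * (pd 1 f y \<bullet> pd 2 f y)"
    by (simp add: DD_def NN_def dot_cross inner_commute)
  have Dn: "DD f y \<noteq> 0" using DDpos[OF imm[OF sol] y] by simp
  have sn: "sqrt (DD f y) \<noteq> 0" using sqDD[OF sol y] by simp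
  note W = W_raw[OF y]
  have e: "vol f y * Wfield f y $ i = - (sqrt (DD f y) * DD f y / psi f y) * 
     ((\<Sum>j\<in>UNIV. adj2 (metric f y) i j / DD f y * (betaD f j y / (DD f y * sqrt (DD f y))))
      + tauD f y / (DD f y * sqrt (DD f y)) * (\<Sum>j\<in>UNIV. adj2 (metric f y) i j / DD f y * (pd j f y $ 3)))"
    unfolding Wfield_def vol_eq[OF sol] phi_eq[OF y]
    by (simp add: grad_nth ginv_eq[OF imm[OF sol] y] pd_H[OF sol y] pd_height[OF sol y] H_tr[OF sol y])
  show ?thesis
    using exhaust_2[of i]
  proof (elim disjE)
    assume i: "i = 1"
    show ?thesis unfolding e YY_def unfolding i using Dn sn p
      apply (simp add: sum_2 adj2_def field_simps ss[OF sol y] abs_of_pos[OF DDpos[OF imm[OF sol] y]])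
      using W(1) by (simp add: inner_commute; (algebra)?)
  next
    assume i: "i = 2"
    show ?thesis unfolding e YY_def unfolding i using Dn sn p
      apply (simp add: sum_2 adj2_def field_simps ss[OF sol y] abs_of_pos[OF DDpos[OF imm[OF sol] y]])
      using W(2) by (simp add: inner_commute; (algebra)?)
  qed
qed

end


context
  fixes U :: "(real^2) set" and f :: "real^2 \<Rightarrow> real^3"
  assumes sol: "translating_soliton U f"
begin

lemma psi_ne: assumes x: "x \<in> U" and g: "grad f (height f) x \<noteq> 0"
  shows "psi f x \<noteq> 0"
proof
  assume p: "psi f x = 0"
  have n12: "NN f x $ 1 = 0" "NN f x $ 2 = 0" using p unfolding psi_def
    by (simp_all add: sum_power2_eq_zero_iff)
  have n3: "NN f x $ 3 \<noteq> 0"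
  proof
    assume "NN f x $ 3 = 0"
    hence "NN f x = 0" using n12 by (simp add: vec_eq_iff forall_3)
    thus False using Nnz[OF imm[OF sol] x] by (simp add: NN_def)
  qed
  have "pd 1 f x \<bullet> NN f x = 0" "pd 2 f x \<bullet> NN f x = 0" unfolding NN_def by (simp_all add: dot_cross_self)
  hence "pd 1 f x $ 3 * NN f x $ 3 = 0" "pd 2 f x $ 3 * NN f x $ 3 = 0"
    using n12 by (simp_all add: inner_vec_def sum_3)
  hence a: "pd 1 f x $ 3 = 0" "pd 2 f x $ 3 = 0" using n3 by simp_all
  have "grad f (height f) x = 0"
    by (simp add: vec_eq_iff grad_nth sum_2 pd_height[OF sol x] a)
  thus False using g by simp
qed

lemma dpsi: "y \<in> U \<Longrightarrow> psi f differentiable at y"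
  unfolding psi_def[abs_def] power2_eq_square using dNN[OF imm[OF sol], of y] by simp

lemma pd_psi: "y \<in> U \<Longrightarrow> pd k (psi f) y = 2 * (NN f y $ 1 * pd k (NN f) y $ 1 + NN f y $ 2 * pd k (NN f) y $ 2)"
  unfolding psi_def[abs_def] power2_eq_square using dNN[OF imm[OF sol], of y] 
  by (simp add: pdr algebra_simps)

lemma Vopen: "open {y \<in> U. psi f y \<noteq> 0}"
proof -
  have c: "continuous_on U (psi f)"
    using continuous_on_eq_continuous_at[OF openU[OF imm[OF sol]]] dpsi differentiable_imp_continuous_within
    by blast
  have "open (psi f -` (- {0}) \<inter> U)"
    using c continuous_on_open_vimage[OF openU[OF imm[OF sol]]] by blast
  moreover have "{y \<in> U. psi f y \<noteq> 0} = psi f -` (- {0}) \<inter> U" by auto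
  ultimately show ?thesis by simp
qed

lemma dPP: "y \<in> U \<Longrightarrow> PP f i differentiable at y"
  unfolding PP_def[abs_def] using dNN[OF imm[OF sol], of y] d1[OF imm[OF sol], of y] d2[OF imm[OF sol], of y]
  by (cases "i = 1") simp_all

lemma dYY: "y \<in> U \<Longrightarrow> psi f y \<noteq> 0 \<Longrightarrow> YY f i differentiable at y"
  unfolding YY_def[abs_def] using dPP dpsi by simp

lemma divY: assumes x: "x \<in> U" and p: "psi f x \<noteq> 0"
  shows "pd 1 (YY f 1) x + pd 2 (YY f 2) x = 0"
proof -
  note I = imm[OF sol]
  have e: "pd 1 (YY f 1) x + pd 2 (YY f 2) x = 
     (pd 1 (PP f 1) x * psi f x - PP f 1 x * pd 1 (psi f) x + (pd 2 (PP f 2) x * psi f x - PP f 2 x * pd 2 (psi f) x)) / (psi f x)\<^sup>2"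
    unfolding YY_def[abs_def] using dPP[OF x] dpsi[OF x] p
    by (simp add: pd_divide add_divide_distrib)
  have "pd 1 (PP f 1) x * psi f x - PP f 1 x * pd 1 (psi f) x + (pd 2 (PP f 2) x * psi f x - PP f 2 x * pd 2 (psi f) x) = 0"
    unfolding pd_psi[OF x] PP_def[abs_def]
    apply (simp add: pdr dNN[OF I] d1[OF I] d2[OF I] x pd_NN[OF I])
    apply (simp add: symx[OF I x] psi_def)
    apply (simp only: NN_def power2_eq_square rawsimps)
    apply algebra
    done
  thus ?thesis unfolding e by simp
qed

end


context
  fixes U :: "(real^2) set" and f :: "real^2 \<Rightarrow> real^3"
  assumes sol: "translating_soliton U f"
begin

lemma c3_raw: assumes y: "y \<in> U"
  shows "betaD f 1 y * PP f 1 y + betaD f 2 y * PP f 2 y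
     = ((pd 1 (pd 1 f) y \<bullet> NN f y) * (pd 2 (pd 2 f) y \<bullet> NN f y) - (pd 1 (pd 2 f) y \<bullet> NN f y)\<^sup>2) * psi f y"
  unfolding betaD_def PP_def dNk_def DD_def NN_def psi_def sym2[OF imm[OF sol] y, of 2 1]
  by (simp only: if_P[OF refl] if_not_P[OF two_ne(2)]) (rule R_c3)

lemma W_comp: assumes y: "y \<in> U" and p: "psi f y \<noteq> 0"
  shows "Wfield f y $ i = YY f i y / vol f y"
  using volW[OF sol y p, of i] sqDD[OF sol y] by (simp add: vol_eq[OF sol] field_simps)

lemma gin_HW: assumes x: "x \<in> U" and p: "psi f x \<noteq> 0"
  shows "gin f x (grad f (mean_curv f) x) (Wfield f x) = (pd 1 (mean_curv f) x * YY f 1 x + pd 2 (mean_curv f) x * YY f 2 x) / vol f x"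
proof -
  have DDe: "DD f x = (pd 1 f x \<bullet> pd 1 f x) * (pd 2 f x \<bullet> pd 2 f x) - (pd 1 f x \<bullet> pd 2 f x) * (pd 1 f x \<bullet> pd 2 f x)"
    by (simp add: DD_def NN_def dot_cross inner_commute)
  have Dn: "DD f x \<noteq> 0" using DDpos[OF imm[OF sol] x] by simp
  have vn: "vol f x \<noteq> 0" using sqDD[OF sol x] by (simp add: vol_eq[OF sol])
  show ?thesis using Dn vn
    apply (simp add: gin_eq grad_nth sum_2 W_comp[OF x p] ginv_eq[OF imm[OF sol] x] adj2_def field_simps inner_commute)
    apply (simp add: DDe)
    apply algebra
    done
qed

lemma K_eq: assumes x: "x \<in> U" and p: "psi f x \<noteq> 0"
  shows "(pd 1 (mean_curv f) x * YY f 1 x + pd 2 (mean_curv f) x * YY f 2 x) / vol f x = gauss_curv f x"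
proof -
  have Dn: "DD f x \<noteq> 0" using DDpos[OF imm[OF sol] x] by simp
  have sn: "sqrt (DD f x) \<noteq> 0" using sqDD[OF sol x] by simp
  note c = c3_raw[OF x]
  show ?thesis
    unfolding gauss_eq[OF imm[OF sol] x] pd_H[OF sol x] vol_eq[OF sol] YY_def using Dn sn p
    apply (simp add: field_simps ss[OF sol x] abs_of_pos[OF DDpos[OF imm[OF sol] x]])
    using c by (simp add: algebra_simps power2_eq_square; (algebra)?)
qed

theorem main:
  shows "\<forall>x\<in>U. grad f (height f) x \<noteq> 0 \<longrightarrow>
      Wfield f x = - (1 / (exp (height f x) *
                       gin f x (grad f (height f) x) (grad f (height f) x))) *\<^sub>R
                   grad f (\<lambda>y. exp (height f y) * mean_curv f y) x
    \<and> divg f (Wfield f) x = 0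
    \<and> gauss_curv f x = gin f x (grad f (mean_curv f) x) (Wfield f x)
    \<and> gauss_curv f x = divg f (\<lambda>y. mean_curv f y *\<^sub>R Wfield f y) x"
proof (intro ballI impI)
  fix x assume x: "x \<in> U" and g: "grad f (height f) x \<noteq> 0"
  note I = imm[OF sol]
  have p: "psi f x \<noteq> 0" by (rule psi_ne[OF sol x g])
  define V where "V = {y \<in> U. psi f y \<noteq> 0}"
  have V: "open V" "x \<in> V" using Vopen[OF sol] x p by (auto simp: V_def)
  have phin: "gin f x (grad f (height f) x) (grad f (height f) x) \<noteq> 0"
    using phi_eq[OF sol x] p DDpos[OF I x] by simp
  have ge: "grad f (\<lambda>y. exp (height f y) * mean_curv f y) x =
     exp (height f x) *\<^sub>R (grad f (mean_curv f) x + mean_curv f x *\<^sub>R grad f (height f) x)"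
    using dheight[OF sol x] dH[OF sol x]
    by (simp add: vec_eq_iff grad_nth pd_mult pd_exp sum_2 algebra_simps)
  have c1: "Wfield f x = - (1 / (exp (height f x) *
                       gin f x (grad f (height f) x) (grad f (height f) x))) *\<^sub>R
                   grad f (\<lambda>y. exp (height f y) * mean_curv f y) x"
    unfolding ge Wfield_def using phin by simp
  have pW: "pd i (\<lambda>y. vol f y * Wfield f y $ i) x = pd i (YY f i) x" for i
    by (rule pd_local[OF V, symmetric]) (use volW[OF sol] dYY[OF sol x p] in \<open>auto simp: V_def\<close>)
  have c2: "divg f (Wfield f) x = 0"
    unfolding divg_def sum_2 pW using divY[OF sol x p] by simp
  have pHW: "pd i (\<lambda>y. vol f y * (mean_curv f y *\<^sub>R Wfield f y) $ i) x
      = pd i (mean_curv f) x * YY f i x + mean_curv f x * pd i (YY f i) x" for i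
  proof -
    have "pd i (\<lambda>y. vol f y * (mean_curv f y *\<^sub>R Wfield f y) $ i) x = pd i (\<lambda>y. mean_curv f y * YY f i y) x"
      by (rule pd_local[OF V, symmetric]) (use volW[OF sol] dYY[OF sol x p] dH[OF sol x] in \<open>auto simp: V_def\<close>)
    also have "\<dots> = pd i (mean_curv f) x * YY f i x + mean_curv f x * pd i (YY f i) x"
      by (rule pd_mult[OF dH[OF sol x] dYY[OF sol x p]])
    finally show ?thesis .
  qed
  have c4: "divg f (\<lambda>y. mean_curv f y *\<^sub>R Wfield f y) x = (pd 1 (mean_curv f) x * YY f 1 x + pd 2 (mean_curv f) x * YY f 2 x) / vol f x"
  proof -
    have "divg f (\<lambda>y. mean_curv f y *\<^sub>R Wfield f y) x = 1 / vol f x *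
       (pd 1 (mean_curv f) x * YY f 1 x + pd 2 (mean_curv f) x * YY f 2 x + mean_curv f x * (pd 1 (YY f 1) x + pd 2 (YY f 2) x))"
      unfolding divg_def sum_2 pHW by (simp add: algebra_simps)
    thus ?thesis using divY[OF sol x p] by simp
  qed
  show "Wfield f x = - (1 / (exp (height f x) *
                       gin f x (grad f (height f) x) (grad f (height f) x))) *\<^sub>R
                   grad f (\<lambda>y. exp (height f y) * mean_curv f y) x
    \<and> divg f (Wfield f) x = 0
    \<and> gauss_curv f x = gin f x (grad f (mean_curv f) x) (Wfield f x)
    \<and> gauss_curv f x = divg f (\<lambda>y. mean_curv f y *\<^sub>R Wfield f y) x"
    using c1 c2 c4 gin_HW[OF x p] K_eq[OF x p] by simp
qed

end


theorem corollary4p6: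
  fixes U :: "(real^2) set" and f :: "real^2 \<Rightarrow> real^3"
  assumes "translating_soliton U f"
  shows "\<forall>x\<in>U. grad f (height f) x \<noteq> 0 \<longrightarrow>
      Wfield f x = - (1 / (exp (height f x) *
                       gin f x (grad f (height f) x) (grad f (height f) x))) *\<^sub>R
                   grad f (\<lambda>y. exp (height f y) * mean_curv f y) x
    \<and> divg f (Wfield f) x = 0
    \<and> gauss_curv f x = gin f x (grad f (mean_curv f) x) (Wfield f x)
    \<and> gauss_curv f x = divg f (\<lambda>y. mean_curv f y *\<^sub>R Wfield f y) x"
  using main[OF assms] .

end
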